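(* Let $\mathbf G$ be a finite group with a subgroup sequence $\{I\}=\mathbf G_0<\mathbf G_1<\cdots<\mathbf G_m=\mathbf G$, generating sets $X_{\mathbf G_k}$ of $\mathbf G_k$, and coset leader sets $\operatorname{CL}(\mathbf G_k/\mathbf G_{k-1})$, such that the Error Control Property holds for every consecutive pair $\mathbf G_{k-1}<\mathbf G_k$ (with respect to $X_{\mathbf G_{k-1}}$, $X_{\mathbf G_k}$ and $\operatorname{CL}(\mathbf G_k/\mathbf G_{k-1})$). Let $g\in\mathbf G$ have canonical form $g=c_m\cdots c_1$ with $c_k\in\operatorname{CL}(\mathbf G_k/\mathbf G_{k-1})$. Then for any $b\in X_{\mathbf G}\cup X_{\mathbf G}^{-1}$, the canonical form $bg=c'_m\cdots c'_1$ ($c'_k\in\operatorname{CL}(\mathbf G_k/\mathbf G_{k-1})$) satisfies $c'_i=c_i$ for all but one index $i$; moreover, for that single index $j$ with $c'_j\neq c_j$, the vertex $c'_j$ is adjacent to $c_j$ in the coset leader graph for $\mathbf G_j$ over $\mathbf G_{j-1}$.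
   Context: $\operatorname{CL}(\mathbf G_k/\mathbf G_{k-1})$ is a set of representatives of the left cosets of $\mathbf G_{k-1}$ in $\mathbf G_k$ containing $I$; every $g\in\mathbf G$ is uniquely $c_m\cdots c_1$ with $c_k\in\operatorname{CL}(\mathbf G_k/\mathbf G_{k-1})$ (canonical form). For a set $X$, $X^{-1}=\{a^{-1}:a\in X\}$. Error Control Property for subgroups $H<K$, coset leaders $\operatorname{CL}(K/H)$ and generating sets $X_H$, $X_K$: for all $b\in X_K\cup X_K^{-1}$ and $c\in\operatorname{CL}(K/H)$, either $bc\in\operatorname{CL}(K/H)$ or $c^{-1}bc\in X_H\cup X_H^{-1}$. The coset leader graph for $K$ over $H$ (with respect to $X_K$) has vertex set $\operatorname{CL}(K/H)$ and a directed edge labelled $a$ from $c$ to $d$ whenever $c=ad$ with $a\in X_K$; two vertices are adjacent if joined by an edge in either direction. *)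

theory Defs
  imports "HOL-Algebra.Algebra"
begin

definition coset_leaders :: "('a, 'b) monoid_scheme \<Rightarrow> 'a set \<Rightarrow> 'a set \<Rightarrow> 'a set \<Rightarrow> bool" where
  "coset_leaders G K H C \<longleftrightarrow> C \<subseteq> K \<and> \<one>\<^bsub>G\<^esub> \<in> C \<and>
     (\<forall>x\<in>K. \<exists>!c. c \<in> C \<and> x \<in> c <#\<^bsub>G\<^esub> H)"

definition error_control :: "('a, 'b) monoid_scheme \<Rightarrow> 'a set \<Rightarrow> 'a set \<Rightarrow> 'a set \<Rightarrow> bool" where
  "error_control G XH XK C \<longleftrightarrow>
     (\<forall>b \<in> XK \<union> (\<lambda>a. inv\<^bsub>G\<^esub> a) ` XK. \<forall>c\<in>C.
        b \<otimes>\<^bsub>G\<^esub> c \<in> C \<or>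
        inv\<^bsub>G\<^esub> c \<otimes>\<^bsub>G\<^esub> b \<otimes>\<^bsub>G\<^esub> c \<in> XH \<union> (\<lambda>a. inv\<^bsub>G\<^esub> a) ` XH)"

fun canon_prod :: "('a, 'b) monoid_scheme \<Rightarrow> (nat \<Rightarrow> 'a) \<Rightarrow> nat \<Rightarrow> 'a" where
  "canon_prod G c 0 = \<one>\<^bsub>G\<^esub>"
| "canon_prod G c (Suc k) = c (Suc k) \<otimes>\<^bsub>G\<^esub> canon_prod G c k"

text \<open>Adjacency in the coset leader graph w.r.t. generating set X:
  edge labelled a from u to v iff u = a v with a \<in> X; adjacent = edge in either direction.\<close>
definition cl_adjacent :: "('a, 'b) monoid_scheme \<Rightarrow> 'a set \<Rightarrow> 'a \<Rightarrow> 'a \<Rightarrow> bool" where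
  "cl_adjacent G S u v \<longleftrightarrow> (\<exists>a\<in>S. u = a \<otimes>\<^bsub>G\<^esub> v \<or> v = a \<otimes>\<^bsub>G\<^esub> u)"

end

theory Submission
  imports Defs
begin

lemma canon_prod_cong:
  "(\<And>i. 1 \<le> i \<Longrightarrow> i \<le> k \<Longrightarrow> c i = d i) \<Longrightarrow> canon_prod G c k = canon_prod G d k"
  by (induction k) auto

lemma canon_prod_sub:
  assumes "subgroup H G" "\<And>i. 1 \<le> i \<Longrightarrow> i \<le> k \<Longrightarrow> c i \<in> H"
  shows "canon_prod G c k \<in> H"
  using assms(2)
proof (induction k)
  case 0 then show ?case using subgroup.one_closed[OF assms(1)] by simp
next
  case (Suc k) then show ?case using subgroup.m_closed[OF assms(1)] by simp
qed

theorem mainTheorem7: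
  fixes G (structure)
    and m :: nat
    and Gs :: "nat \<Rightarrow> 'a set"
    and Xs :: "nat \<Rightarrow> 'a set"
    and CL :: "nat \<Rightarrow> 'a set"
    and c c' :: "nat \<Rightarrow> 'a"
    and g b :: 'a
  assumes "group G"
    and "finite (carrier G)"
    and "Gs 0 = {\<one>}"
    and "Gs m = carrier G"
    and "\<And>k. k \<le> m \<Longrightarrow> subgroup (Gs k) G"
    and "\<And>k. 1 \<le> k \<Longrightarrow> k \<le> m \<Longrightarrow> Gs (k - 1) \<subset> Gs k"
    and "\<And>k. k \<le> m \<Longrightarrow> Xs k \<subseteq> Gs k \<and> generate G (Xs k) = Gs k"
    and "\<And>k. 1 \<le> k \<Longrightarrow> k \<le> m \<Longrightarrow> coset_leaders G (Gs k) (Gs (k - 1)) (CL k)"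
    and "\<And>k. 1 \<le> k \<Longrightarrow> k \<le> m \<Longrightarrow> error_control G (Xs (k - 1)) (Xs k) (CL k)"
    and "g \<in> carrier G"
    and "\<And>k. 1 \<le> k \<Longrightarrow> k \<le> m \<Longrightarrow> c k \<in> CL k"
    and "g = canon_prod G c m"
    and "b \<in> Xs m \<union> (\<lambda>a. inv a) ` Xs m"
    and "\<And>k. 1 \<le> k \<Longrightarrow> k \<le> m \<Longrightarrow> c' k \<in> CL k"
    and "b \<otimes> g = canon_prod G c' m"
  shows "(\<exists>j. \<forall>i\<in>{1..m}. i \<noteq> j \<longrightarrow> c' i = c i) \<and>
         (\<forall>j\<in>{1..m}. c' j \<noteq> c j \<longrightarrow> cl_adjacent G (Xs j) (c j) (c' j))"
proof -
  interpret group G by fact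
  note sg = assms(5)
  have mono: "Gs i \<subseteq> Gs k" if "i \<le> k" "k \<le> m" for i k
    using that
  proof (induction k)
    case 0 then show ?case by simp
  next
    case (Suc k)
    show ?case
    proof (cases "i = Suc k")
      case True then show ?thesis by simp
    next
      case False
      then have "Gs i \<subseteq> Gs k" using Suc by simp
      moreover have "Gs k \<subset> Gs (Suc k)" using assms(6)[of "Suc k"] Suc.prems by simp
      ultimately show ?thesis by blast
    qed
  qed
  have CLsub: "CL k \<subseteq> Gs k" if "1 \<le> k" "k \<le> m" for k
    using assms(8)[OF that] unfolding coset_leaders_def by blast
  have Gcar: "Gs k \<subseteq> carrier G" if "k \<le> m" for k
    using sg[OF that] subgroup.subset by blast
  have CLcar: "x \<in> carrier G" if "x \<in> CL k" "1 \<le> k" "k \<le> m" for x k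
    using CLsub[OF that(2,3)] Gcar[OF that(3)] that(1) by blast
  have Xcar: "x \<in> carrier G" if "x \<in> Xs k" "k \<le> m" for x k
    using assms(7)[OF that(2)] Gcar[OF that(2)] that(1) by blast
  have cpG: "canon_prod G d k \<in> Gs k"
    if "k \<le> m" "\<And>i. 1 \<le> i \<Longrightarrow> i \<le> k \<Longrightarrow> d i \<in> CL i" for d k
  proof (rule canon_prod_sub[OF sg[OF that(1)]])
    fix i assume i: "1 \<le> i" "i \<le> k"
    have "d i \<in> CL i" using that(2) i .
    moreover have "CL i \<subseteq> Gs i" using CLsub[of i] i that(1) by simp
    moreover have "Gs i \<subseteq> Gs k" using mono[of i k] i that(1) by simp
    ultimately show "d i \<in> Gs k" by blast
  qed
  have uniq: "n \<le> m \<Longrightarrow> (\<forall>i. 1 \<le> i \<longrightarrow> i \<le> n \<longrightarrow> d i \<in> CL i) \<Longrightarrow>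
      (\<forall>i. 1 \<le> i \<longrightarrow> i \<le> n \<longrightarrow> d' i \<in> CL i) \<Longrightarrow>
      canon_prod G d n = canon_prod G d' n \<Longrightarrow> \<forall>i\<in>{1..n}. d i = d' i" for n d d'
  proof (induction n)
    case 0 then show ?case by simp
  next
    case (Suc n)
    have dn: "d (Suc n) \<in> CL (Suc n)" "d' (Suc n) \<in> CL (Suc n)" using Suc.prems(2,3) by auto
    have dc: "d (Suc n) \<in> carrier G" "d' (Suc n) \<in> carrier G"
      using dn CLcar Suc.prems(1) by auto
    have p1: "canon_prod G d n \<in> Gs n" "canon_prod G d' n \<in> Gs n"
      using cpG[of n d] cpG[of n d'] Suc.prems(1,2,3) by auto
    have p1c: "canon_prod G d n \<in> carrier G" "canon_prod G d' n \<in> carrier G"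
      using p1 Gcar[of n] Suc.prems(1) by auto
    let ?x = "canon_prod G d (Suc n)"
    have xin: "?x \<in> Gs (Suc n)"
      using cpG[of "Suc n" d] Suc.prems(1,2) by auto
    have cl: "coset_leaders G (Gs (Suc n)) (Gs n) (CL (Suc n))"
      using assms(8)[of "Suc n"] Suc.prems(1) by simp
    have m1: "?x \<in> d (Suc n) <# Gs n"
      unfolding l_coset_def using p1(1) by (intro UN_I[of "canon_prod G d n"]) simp_all
    have m2: "?x \<in> d' (Suc n) <# Gs n"
      unfolding l_coset_def using p1(2) Suc.prems(4) by (intro UN_I[of "canon_prod G d' n"]) simp_all
    have eqtop: "d (Suc n) = d' (Suc n)"
    proof -
      have "\<exists>!c. c \<in> CL (Suc n) \<and> ?x \<in> c <# Gs n"
        using cl xin unfolding coset_leaders_def by simp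
      then show ?thesis using m1 m2 dn by blast
    qed
    have "d' (Suc n) \<otimes> canon_prod G d n = d' (Suc n) \<otimes> canon_prod G d' n"
      using Suc.prems(4) eqtop by simp
    then have "canon_prod G d n = canon_prod G d' n"
      using dc p1c by (metis Units_l_cancel Units_eq)
    then have "\<forall>i\<in>{1..n}. d i = d' i"
      using Suc.IH Suc.prems(1,2,3) by auto
    then show ?case using eqtop by (auto simp: le_Suc_eq)
  qed
  have P: "\<forall>\<beta> \<in> Xs k \<union> (\<lambda>a. inv a) ` Xs k. \<exists>e. (\<forall>i. 1 \<le> i \<longrightarrow> i \<le> k \<longrightarrow> e i \<in> CL i) \<and>
      \<beta> \<otimes> canon_prod G c k = canon_prod G e k \<and>
      (\<exists>j. \<forall>i\<in>{1..k}. i \<noteq> j \<longrightarrow> e i = c i) \<and>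
      (\<forall>j\<in>{1..k}. e j \<noteq> c j \<longrightarrow> cl_adjacent G (Xs j) (c j) (e j))"
    if "k \<le> m" for k
    using that
  proof (induction k)
    case 0
    show ?case
    proof
      fix \<beta> assume h: "\<beta> \<in> Xs 0 \<union> (\<lambda>a. inv a) ` Xs 0"
      have "Xs 0 \<subseteq> {\<one>}" using assms(7)[of 0] assms(3) by simp
      then have "\<beta> = \<one>" using h by auto
      then show "\<exists>e. (\<forall>i. 1 \<le> i \<longrightarrow> i \<le> 0 \<longrightarrow> e i \<in> CL i) \<and>
      \<beta> \<otimes> canon_prod G c 0 = canon_prod G e 0 \<and>
      (\<exists>j. \<forall>i\<in>{1..0}. i \<noteq> j \<longrightarrow> e i = c i) \<and>
      (\<forall>j\<in>{1..0}. e j \<noteq> c j \<longrightarrow> cl_adjacent G (Xs j) (c j) (e j))"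
        by (intro exI[of _ c]) auto
    qed
  next
    case (Suc k)
    show ?case
    proof
      fix \<beta> assume h: "\<beta> \<in> Xs (Suc k) \<union> (\<lambda>a. inv a) ` Xs (Suc k)"
      have \<beta>c: "\<beta> \<in> carrier G" using h Xcar Suc.prems by auto
      have ck: "c (Suc k) \<in> CL (Suc k)" using assms(11) Suc.prems by simp
      have ckc: "c (Suc k) \<in> carrier G" using ck CLcar Suc.prems by auto
      have cpc: "canon_prod G c k \<in> carrier G"
      proof -
        have "canon_prod G c k \<in> Gs k" using cpG[of k c] assms(11) Suc.prems by simp
        then show ?thesis using Gcar[of k] Suc.prems by auto
      qed
      have ec: "error_control G (Xs k) (Xs (Suc k)) (CL (Suc k))"
        using assms(9)[of "Suc k"] Suc.prems by simp
      have cCL: "\<And>i. 1 \<le> i \<Longrightarrow> i \<le> k \<Longrightarrow> c i \<in> CL i" using assms(11) Suc.prems by simp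
      show "\<exists>e. (\<forall>i. 1 \<le> i \<longrightarrow> i \<le> Suc k \<longrightarrow> e i \<in> CL i) \<and>
      \<beta> \<otimes> canon_prod G c (Suc k) = canon_prod G e (Suc k) \<and>
      (\<exists>j. \<forall>i\<in>{1..Suc k}. i \<noteq> j \<longrightarrow> e i = c i) \<and>
      (\<forall>j\<in>{1..Suc k}. e j \<noteq> c j \<longrightarrow> cl_adjacent G (Xs j) (c j) (e j))"
      proof (cases "\<beta> \<otimes> c (Suc k) \<in> CL (Suc k)")
        case True
        define e where "e = c(Suc k := \<beta> \<otimes> c (Suc k))"
        have cpe: "canon_prod G e k = canon_prod G c k"
          by (rule canon_prod_cong) (simp add: e_def)
        have adj: "cl_adjacent G (Xs (Suc k)) (c (Suc k)) (\<beta> \<otimes> c (Suc k))"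
          using h
        proof
          assume "\<beta> \<in> Xs (Suc k)" then show ?thesis unfolding cl_adjacent_def by blast
        next
          assume "\<beta> \<in> (\<lambda>a. inv a) ` Xs (Suc k)"
          then obtain a where a: "a \<in> Xs (Suc k)" "\<beta> = inv a" by auto
          have ac: "a \<in> carrier G" using a Xcar Suc.prems by auto
          have "a \<otimes> (\<beta> \<otimes> c (Suc k)) = c (Suc k)"
            using a ac ckc by (simp add: m_assoc[symmetric])
          then show ?thesis unfolding cl_adjacent_def using a by metis
        qed
        show ?thesis
          apply (rule exI[of _ e])
          using True cCL cpe adj \<beta>c ckc cpc
          by (auto simp: e_def m_assoc le_Suc_eq intro!: exI[of _ "Suc k"])
      next
        case False
        then have b': "inv c (Suc k) \<otimes> \<beta> \<otimes> c (Suc k) \<in> Xs k \<union> (\<lambda>a. inv a) ` Xs k"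
          using ec h ck unfolding error_control_def by auto
        have IH: "\<forall>\<beta> \<in> Xs k \<union> (\<lambda>a. inv a) ` Xs k. \<exists>e. (\<forall>i. 1 \<le> i \<longrightarrow> i \<le> k \<longrightarrow> e i \<in> CL i) \<and>
      \<beta> \<otimes> canon_prod G c k = canon_prod G e k \<and>
      (\<exists>j. \<forall>i\<in>{1..k}. i \<noteq> j \<longrightarrow> e i = c i) \<and>
      (\<forall>j\<in>{1..k}. e j \<noteq> c j \<longrightarrow> cl_adjacent G (Xs j) (c j) (e j))"
          using Suc.IH Suc.prems by simp
        obtain e where e: "\<forall>i. 1 \<le> i \<longrightarrow> i \<le> k \<longrightarrow> e i \<in> CL i"
          "(inv c (Suc k) \<otimes> \<beta> \<otimes> c (Suc k)) \<otimes> canon_prod G c k = canon_prod G e k"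
          "\<exists>j. \<forall>i\<in>{1..k}. i \<noteq> j \<longrightarrow> e i = c i"
          "\<forall>j\<in>{1..k}. e j \<noteq> c j \<longrightarrow> cl_adjacent G (Xs j) (c j) (e j)"
          using bspec[OF IH b'] by blast
        define e' where "e' = e(Suc k := c (Suc k))"
        have cpe: "canon_prod G e' k = canon_prod G e k"
          by (rule canon_prod_cong) (simp add: e'_def)
        have eq: "\<beta> \<otimes> canon_prod G c (Suc k) = canon_prod G e' (Suc k)"
        proof -
          have "canon_prod G e' (Suc k) = c (Suc k) \<otimes> canon_prod G e k"
            using cpe by (simp add: e'_def)
          also have "\<dots> = c (Suc k) \<otimes> ((inv c (Suc k) \<otimes> \<beta> \<otimes> c (Suc k)) \<otimes> canon_prod G c k)"
            using e(2) by simp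
          also have "\<dots> = \<beta> \<otimes> canon_prod G c (Suc k)"
            using ckc \<beta>c cpc by (simp add: m_assoc[symmetric])
          finally show ?thesis by simp
        qed
        obtain j where j: "\<forall>i\<in>{1..k}. i \<noteq> j \<longrightarrow> e i = c i" using e(3) by blast
        show ?thesis
          apply (rule exI[of _ e'])
          using e(1) e(4) j eq ck
          by (auto simp: e'_def le_Suc_eq intro!: exI[of _ j])
      qed
    qed
  qed
  obtain e where e: "\<forall>i. 1 \<le> i \<longrightarrow> i \<le> m \<longrightarrow> e i \<in> CL i"
      "b \<otimes> canon_prod G c m = canon_prod G e m"
      "\<exists>j. \<forall>i\<in>{1..m}. i \<noteq> j \<longrightarrow> e i = c i"
      "\<forall>j\<in>{1..m}. e j \<noteq> c j \<longrightarrow> cl_adjacent G (Xs j) (c j) (e j)"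
    using P[of m] assms(13) by blast
  have "\<forall>i\<in>{1..m}. c' i = e i"
    using uniq[of m c' e] assms(14,15,12) e(1,2) by auto
  then show ?thesis using e(3,4) by auto
qed

end
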